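(* Let $n\ge2$ and consider the test $\mathcal{T}_2$ described below. For every $i\in[n]$, the polynomial $f(x)=x_i$ passes $\mathcal{T}_2$ with probability at least $1-\beta$, where $\beta=1/\log n$.
   Context: The test $\mathcal{T}_2$ takes as input a degree-2 real polynomial $f:\mathbb{R}^n\to\mathbb{R}$. Fix $\beta:=1/\log n$ and $\delta:=2^{-n}$. Generate independent bits $a_1,\dots,a_n\in\{0,1\}$ each with expected value $\beta$ and independent standard Gaussians $g_1,\dots,g_n$; set $r=(a_1g_1,\dots,a_ng_n)$. Pick $i$ uniformly from $\{1,2,\dots,(\log n)^2\}$ and set $t=n^i$; pick a uniform $b\in\{-1,1\}$ (all choices independent). Let $\omega=(1,\dots,1)\in\mathbb{R}^n$ and $y=t^3r+bt^2\delta\omega$. The test accepts (f passes) iff $\mathrm{sign}(f(y))=b$. *)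

theory Defs
  imports "HOL-Probability.Probability"
begin

definition T2_beta :: "nat \<Rightarrow> real" where
  "T2_beta n = 1 / log 2 (real n)"

definition T2_delta :: "nat \<Rightarrow> real" where
  "T2_delta n = (1/2) ^ n"

definition T2_K :: "nat \<Rightarrow> nat" where
  "T2_K n = nat \<lfloor>(log 2 (real n))\<^sup>2\<rfloor>"

text \<open>Sample space: bits a_1..a_n (Bernoulli beta), Gaussians g_1..g_n (standard normal),
  exponent i uniform on {1..K}, sign b uniform on {-1,1}; all independent.\<close>
definition T2_space :: "nat \<Rightarrow> ((nat \<Rightarrow> bool) \<times> (nat \<Rightarrow> real) \<times> nat \<times> real) measure" where
  "T2_space n =
     (PiM {1..n} (\<lambda>_. measure_pmf (bernoulli_pmf (T2_beta n))))
     \<Otimes>\<^sub>M ((PiM {1..n} (\<lambda>_. density lborel std_normal_density))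
     \<Otimes>\<^sub>M (measure_pmf (pmf_of_set {1..T2_K n})
     \<Otimes>\<^sub>M measure_pmf (pmf_of_set {-1, 1::real})))"

definition T2_point :: "nat \<Rightarrow> (nat \<Rightarrow> bool) \<Rightarrow> (nat \<Rightarrow> real) \<Rightarrow> nat \<Rightarrow> real \<Rightarrow> (nat \<Rightarrow> real)" where
  "T2_point n a g i b = (\<lambda>k. if k \<in> {1..n} then
      (real n ^ i) ^ 3 * ((if a k then 1 else 0) * g k) + b * (real n ^ i)\<^sup>2 * T2_delta n
    else 0)"

definition T2_pass_prob :: "nat \<Rightarrow> ((nat \<Rightarrow> real) \<Rightarrow> real) \<Rightarrow> real" where
  "T2_pass_prob n f = measure (T2_space n)
     {(a, g, i, b) \<in> space (T2_space n). sgn (f (T2_point n a g i b)) = b}"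

end

theory Submission imports Defs begin

lemma pmf_id_borel: "(\<lambda>x::real. x) \<in> borel_measurable (measure_pmf q)"
  by (simp add: measurable_pmf_measure1)

theorem mainTheorem8:
  fixes n j :: nat
  assumes "n \<ge> 2" and "j \<in> {1..n}"
  shows "T2_pass_prob n (\<lambda>x. x j) \<ge> 1 - T2_beta n"
proof -
  note j = assms(2)
  define \<beta> where "\<beta> = T2_beta n"
  have lg: "log 2 (real n) \<ge> 1" using assms(1) by simp
  have b0: "0 \<le> \<beta>" "\<beta> \<le> 1" using lg unfolding \<beta>_def T2_beta_def by auto
  define Ma where "Ma = PiM {1..n} (\<lambda>_. measure_pmf (bernoulli_pmf (T2_beta n)))"
  define Mg where "Mg = (PiM {1..n} (\<lambda>_. density lborel std_normal_density))"
  define Mi where "Mi = measure_pmf (pmf_of_set {1..T2_K n})"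
  define Mb where "Mb = measure_pmf (pmf_of_set {-1, 1::real})"
  have Msp: "T2_space n = Ma \<Otimes>\<^sub>M (Mg \<Otimes>\<^sub>M (Mi \<Otimes>\<^sub>M Mb))"
    unfolding T2_space_def Ma_def Mg_def Mi_def Mb_def ..
  have pa: "prob_space Ma" unfolding Ma_def
    by (intro prob_space_PiM) (simp add: prob_space_measure_pmf)
  have pg: "prob_space Mg" unfolding Mg_def
    by (intro prob_space_PiM prob_space_normal_density) simp
  have pi: "prob_space Mi" "prob_space Mb" unfolding Mi_def Mb_def
    by (simp_all add: prob_space_measure_pmf)
  have pib: "prob_space (Mi \<Otimes>\<^sub>M Mb)" using pi by (rule prob_space_pair)
  have pgib: "prob_space (Mg \<Otimes>\<^sub>M (Mi \<Otimes>\<^sub>M Mb))" using pg pib by (rule prob_space_pair)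
  have P: "prob_space (T2_space n)" unfolding Msp using pa pgib by (rule prob_space_pair)
  define A where "A = prod_emb {1..n} (\<lambda>_. measure_pmf (bernoulli_pmf (T2_beta n))) {j} (PiE {j} (\<lambda>_. {False}))"
  define B where "B = space Mg \<times> (space Mi \<times> {-1, 1::real})"
  have Asets: "A \<in> sets Ma" unfolding A_def Ma_def using j
    by (intro sets_PiM_I) auto
  have Aem: "emeasure Ma A = ennreal (1 - \<beta>)"
  proof -
    have "emeasure Ma A = (\<Prod>i\<in>{j}. emeasure (measure_pmf (bernoulli_pmf (T2_beta n))) {False})"
      unfolding A_def Ma_def using j
      by (intro emeasure_PiM_emb) (auto simp: prob_space_measure_pmf)
    also have "\<dots> = ennreal (1 - \<beta>)"
      using b0 by (simp add: emeasure_pmf_single \<beta>_def)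
    finally show ?thesis .
  qed
  have Bsets: "B \<in> sets (Mg \<Otimes>\<^sub>M (Mi \<Otimes>\<^sub>M Mb))" unfolding B_def
    by (intro pair_measureI) (auto simp: Mi_def Mb_def)
  have Bem: "emeasure (Mg \<Otimes>\<^sub>M (Mi \<Otimes>\<^sub>M Mb)) B = 1"
  proof -
    interpret s1: sigma_finite_measure "Mi \<Otimes>\<^sub>M Mb" using pib by (rule prob_space_imp_sigma_finite)
    interpret s2: sigma_finite_measure Mb using pi(2) by (rule prob_space_imp_sigma_finite)
    have "emeasure (Mi \<Otimes>\<^sub>M Mb) (space Mi \<times> {-1, 1::real}) = emeasure Mi (space Mi) * emeasure Mb {-1,1}"
      by (intro s2.emeasure_pair_measure_Times) (auto simp: Mb_def)
    also have "\<dots> = 1" using pi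
      by (simp add: prob_space.emeasure_space_1 Mb_def emeasure_pmf_of_set_space)
    finally have 1: "emeasure (Mi \<Otimes>\<^sub>M Mb) (space Mi \<times> {-1, 1::real}) = 1" .
    have "emeasure (Mg \<Otimes>\<^sub>M (Mi \<Otimes>\<^sub>M Mb)) B = emeasure Mg (space Mg) * emeasure (Mi \<Otimes>\<^sub>M Mb) (space Mi \<times> {-1, 1::real})"
      unfolding B_def by (intro s1.emeasure_pair_measure_Times) (auto simp: Mi_def Mb_def)
    also have "\<dots> = 1" using 1 pg by (simp add: prob_space.emeasure_space_1)
    finally show ?thesis .
  qed
  have Eem: "emeasure (T2_space n) (A \<times> B) = ennreal (1 - \<beta>)"
  proof -
    interpret s: sigma_finite_measure "Mg \<Otimes>\<^sub>M (Mi \<Otimes>\<^sub>M Mb)" using pgib by (rule prob_space_imp_sigma_finite)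
    show ?thesis unfolding Msp using Asets Bsets Aem Bem
      by (simp add: s.emeasure_pair_measure_Times)
  qed
  have Esets: "A \<times> B \<in> sets (T2_space n)" unfolding Msp using Asets Bsets by (rule pair_measureI)
  define S where "S = {(a, g, i, b) \<in> space (T2_space n). sgn ((\<lambda>x. x j) (T2_point n a g i b)) = b}"
  have Ssets: "S \<in> sets (T2_space n)"
  proof -
    let ?M = "T2_space n"
    have b: "(\<lambda>p. snd (snd (snd p))) \<in> borel_measurable ?M"
    proof -
      have 1: "(\<lambda>p. snd (snd (snd p))) \<in> ?M \<rightarrow>\<^sub>M measure_pmf (pmf_of_set {-1, 1::real})"
        unfolding T2_space_def by measurable
      show ?thesis using measurable_compose[OF 1 pmf_id_borel] by simp
    qed
    have i: "(\<lambda>p. real n ^ fst (snd (snd p))) \<in> borel_measurable ?M"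
      unfolding T2_space_def by measurable
    have a: "(\<lambda>p. (if fst p j then 1 else 0::real)) \<in> borel_measurable ?M"
      using j unfolding T2_space_def by measurable
    have g: "(\<lambda>p. fst (snd p) j) \<in> borel_measurable ?M"
      using j unfolding T2_space_def by measurable
    have "{p \<in> space ?M. sgn ((real n ^ fst (snd (snd p))) ^ 3 *
                   ((if fst p j then 1 else 0) * fst (snd p) j) +
                   snd (snd (snd p)) * (real n ^ fst (snd (snd p)))\<^sup>2 *
                   T2_delta n) = snd (snd (snd p))} \<in> sets ?M"
      using a b i g by measurable
    also have "{p \<in> space ?M. sgn ((real n ^ fst (snd (snd p))) ^ 3 *
                   ((if fst p j then 1 else 0) * fst (snd p) j) +
                   snd (snd (snd p)) * (real n ^ fst (snd (snd p)))\<^sup>2 *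
                   T2_delta n) = snd (snd (snd p))} = S"
      unfolding S_def T2_point_def using j by (auto simp: case_prod_beta)
    finally show ?thesis .
  qed
  have sub: "A \<times> B \<subseteq> S"
  proof
    fix p assume p: "p \<in> A \<times> B"
    obtain a g i b where pe: "p = (a, g, i, b)" by (cases p) auto
    have sp: "p \<in> space (T2_space n)" using Esets p sets.sets_into_space by blast
    have na: "\<not> a j"
    proof -
      have "restrict a {j} \<in> PiE {j} (\<lambda>_. {False})" using p unfolding pe A_def prod_emb_def by auto
      then have "restrict a {j} j \<in> {False}" by (rule PiE_mem) simp
      then show ?thesis by simp
    qed
    have bb: "b \<in> {-1, 1}" using p unfolding pe B_def by auto
    have pos: "(real n ^ i)\<^sup>2 * T2_delta n > 0" using assms(1) by (simp add: T2_delta_def)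
    have "sgn (b * (real n ^ i)\<^sup>2 * T2_delta n) = b"
      proof -
        have "sgn (b * ((real n ^ i)\<^sup>2 * T2_delta n)) = sgn b * sgn ((real n ^ i)\<^sup>2 * T2_delta n)"
          by (rule sgn_mult)
        also have "sgn ((real n ^ i)\<^sup>2 * T2_delta n) = 1" using pos by simp
        finally show ?thesis using bb by (auto simp: mult.assoc)
      qed
    then show "p \<in> S" using sp na j unfolding S_def pe T2_point_def by auto
  qed
  interpret P: prob_space "T2_space n" by (rule P)
  have "measure (T2_space n) (A \<times> B) = 1 - \<beta>" using Eem b0 by (simp add: measure_def)
  moreover have "measure (T2_space n) (A \<times> B) \<le> measure (T2_space n) S"
    using sub Ssets by (intro P.finite_measure_mono) auto
  ultimately show ?thesis unfolding T2_pass_prob_def S_def[symmetric] \<beta>_def by simp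
qed
end
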